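(* For any finite simple graph $G$, $\tau(G) \leq 1.5\,\tau^*_3(G)$, while there exists a family of graphs $G$ for which $\tau(G) = (2-o(1))\,\tau^*(G)$.
   Context: A triangle of $G$ is a set of three pairwise adjacent vertices, identified with its three edges. $\tau(G)$ is the minimum size of a set of edges meeting every triangle of $G$. $\tau^*(G)$ is the optimum value of the linear program: minimize $\sum_{e\in E(G)} x_e$ subject to $\sum_{e\in E(t)} x_e\ge 1$ for every triangle $t$ and $x\ge 0$. For an integer $k\ge1$, $\tau^*_k(G)$ is the minimum of $\sum_e z(e)$ over all $z:E(G)\to\{0,1/k,\dots,1\}$ with $\sum_{e\in E(t)} z(e)\ge1$ for every triangle $t$ (equivalently, the minimum of $|F|/k$ over multisets $F$ of edges such that each triangle contains at least $k$ elements of $F$). *)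

theory Defs
  imports Complex_Main
begin

definition simple_graph :: "'a set \<Rightarrow> 'a set set \<Rightarrow> bool" where
  "simple_graph V E \<longleftrightarrow> finite V \<and> (\<forall>e\<in>E. e \<subseteq> V \<and> card e = 2)"

definition triangles :: "'a set \<Rightarrow> 'a set set \<Rightarrow> 'a set set" where
  "triangles V E = {{x, y, z} | x y z. x \<in> V \<and> y \<in> V \<and> z \<in> V \<and>
      x \<noteq> y \<and> y \<noteq> z \<and> x \<noteq> z \<and> {x, y} \<in> E \<and> {y, z} \<in> E \<and> {x, z} \<in> E}"

definition tri_edges :: "'a set \<Rightarrow> 'a set set" where
  "tri_edges t = {e. e \<subseteq> t \<and> card e = 2}"

definition tau :: "'a set \<Rightarrow> 'a set set \<Rightarrow> nat" where
  "tau V E = Min {card F | F. F \<subseteq> E \<and> (\<forall>t\<in>triangles V E. F \<inter> tri_edges t \<noteq> {})}"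

definition tau_star :: "'a set \<Rightarrow> 'a set set \<Rightarrow> real" where
  "tau_star V E = Inf {(\<Sum>e\<in>E. x e) | x :: 'a set \<Rightarrow> real.
      (\<forall>e\<in>E. x e \<ge> 0) \<and> (\<forall>t\<in>triangles V E. (\<Sum>e\<in>tri_edges t. x e) \<ge> 1)}"

text \<open>tau*_k(G): minimum of sum z(e) over z : E -> {0, 1/k, ..., 1} with
  every triangle having total weight at least 1; we write z = w/k with w
  natural-valued, 0 <= w e <= k.\<close>
definition tau_k :: "nat \<Rightarrow> 'a set \<Rightarrow> 'a set set \<Rightarrow> real" where
  "tau_k k V E = Inf {(\<Sum>e\<in>E. real (w e)) / real k | w :: 'a set \<Rightarrow> nat.
      (\<forall>e\<in>E. w e \<le> k) \<and> (\<forall>t\<in>triangles V E. (\<Sum>e\<in>tri_edges t. w e) \<ge> k)}"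

end

theory Submission
  imports Defs
begin

lemma maxcut:
  assumes "finite V" "\<forall>e\<in>E. e \<subseteq> V \<and> card e = 2"
  shows "\<exists>S. 2 * card {e\<in>E. e \<subseteq> S \<or> e \<inter> S = {}} \<le> card E"
  using assms
proof (induction V arbitrary: E rule: finite_induct)
  case empty
  then have "E = {}" by fastforce
  then show ?case by simp
next
  case (insert v F)
  define E' where "E' = {e\<in>E. v \<notin> e}"
  define Ev where "Ev = {e\<in>E. v \<in> e}"
  have finE: "finite E"
  proof -
    have "E \<subseteq> Pow (insert v F)" using insert.prems by auto
    then show ?thesis using finite_subset insert.hyps(1) by blast
  qed
  have "\<forall>e\<in>E'. e \<subseteq> F \<and> card e = 2" using insert.prems unfolding E'_def by blast
  then obtain S where S: "2 * card {e\<in>E'. e \<subseteq> S \<or> e \<inter> S = {}} \<le> card E'"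
    using insert.IH by blast
  define nc where "nc = (\<lambda>S. {e\<in>E. e \<subseteq> S \<or> e \<inter> S = {}})"
  define S1 where "S1 = insert v S"
  define S2 where "S2 = S - {v}"
  have E'1: "{e\<in>E'. e \<subseteq> S1 \<or> e \<inter> S1 = {}} = {e\<in>E'. e \<subseteq> S \<or> e \<inter> S = {}}"
    unfolding E'_def S1_def by blast
  have E'2: "{e\<in>E'. e \<subseteq> S2 \<or> e \<inter> S2 = {}} = {e\<in>E'. e \<subseteq> S \<or> e \<inter> S = {}}"
    unfolding E'_def S2_def by blast
  have split: "nc X = {e\<in>E'. e \<subseteq> X \<or> e \<inter> X = {}} \<union> {e\<in>Ev. e \<subseteq> X \<or> e \<inter> X = {}}" for X
    unfolding nc_def E'_def Ev_def by blast
  have cardsplit: "card (nc X) = card {e\<in>E'. e \<subseteq> X \<or> e \<inter> X = {}} + card {e\<in>Ev. e \<subseteq> X \<or> e \<inter> X = {}}" for X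
    unfolding split by (rule card_Un_disjoint) (use finE in \<open>auto simp: E'_def Ev_def\<close>)
  have Evsplit: "{e\<in>Ev. e \<subseteq> S1 \<or> e \<inter> S1 = {}} \<union> {e\<in>Ev. e \<subseteq> S2 \<or> e \<inter> S2 = {}} = Ev"
  proof -
    have "e \<subseteq> S1 \<or> e \<subseteq> S2 \<or> e \<inter> S2 = {}" if "e \<in> Ev" for e
    proof -
      from that have "card e = 2" "v \<in> e" using insert.prems unfolding Ev_def by auto
      then obtain u where e: "e = {v, u}" "u \<noteq> v" by (auto simp: card_2_iff)
      then show ?thesis unfolding S1_def S2_def by auto
    qed
    then show ?thesis by blast
  qed
  have Evdisj: "{e\<in>Ev. e \<subseteq> S1 \<or> e \<inter> S1 = {}} \<inter> {e\<in>Ev. e \<subseteq> S2 \<or> e \<inter> S2 = {}} = {}"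
  proof -
    have False if "e \<in> Ev" "e \<subseteq> S1 \<or> e \<inter> S1 = {}" "e \<subseteq> S2 \<or> e \<inter> S2 = {}" for e
    proof -
      from that have "card e = 2" "v \<in> e" using insert.prems unfolding Ev_def by auto
      then obtain u where e: "e = {v, u}" "u \<noteq> v" by (auto simp: card_2_iff)
      then show ?thesis using that(2,3) unfolding S1_def S2_def by auto
    qed
    then show ?thesis by blast
  qed
  have finEv: "finite Ev" using finE unfolding Ev_def by simp
  have "card {e\<in>Ev. e \<subseteq> S1 \<or> e \<inter> S1 = {}} + card {e\<in>Ev. e \<subseteq> S2 \<or> e \<inter> S2 = {}} = card Ev"
    using card_Un_disjoint[OF _ _ Evdisj] Evsplit finEv by (metis (no_types, lifting) finite_Un)
  moreover have "card E = card E' + card Ev"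
  proof -
    have "E = E' \<union> Ev" "E' \<inter> Ev = {}" unfolding E'_def Ev_def by auto
    then show ?thesis using finE by (metis card_Un_disjoint finite_Un)
  qed
  ultimately have "2 * card (nc S1) \<le> card E \<or> 2 * card (nc S2) \<le> card E"
    using S cardsplit[of S1, unfolded E'1] cardsplit[of S2, unfolded E'2] by linarith
  then show ?case unfolding nc_def by blast
qed

lemma tri_edges_3:
  assumes "x \<noteq> y" "y \<noteq> z" "x \<noteq> z"
  shows "tri_edges {x, y, z} = {{x, y}, {y, z}, {x, z}}"
proof
  show "tri_edges {x, y, z} \<subseteq> {{x, y}, {y, z}, {x, z}}"
  proof
    fix e assume "e \<in> tri_edges {x, y, z}"
    then have "e \<subseteq> {x,y,z}" "card e = 2" unfolding tri_edges_def by auto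
    then obtain a b where "e = {a,b}" "a \<noteq> b" by (auto simp: card_2_iff)
    then show "e \<in> {{x, y}, {y, z}, {x, z}}" using \<open>e \<subseteq> {x,y,z}\<close> by auto
  qed
  show "{{x, y}, {y, z}, {x, z}} \<subseteq> tri_edges {x, y, z}"
    using assms unfolding tri_edges_def by auto
qed

lemma tri_sum_3:
  assumes "x \<noteq> y" "y \<noteq> z" "x \<noteq> z"
  shows "(\<Sum>e\<in>tri_edges {x, y, z}. f e) = f {x,y} + f {y,z} + f {x,z}"
proof -
  have d: "{x,y} \<noteq> {y,z}" "{x,y} \<noteq> {x,z}" "{y,z} \<noteq> {x,z}"
    using assms by (auto simp: doubleton_eq_iff)
  show ?thesis unfolding tri_edges_3[OF assms] using d by (simp add: add.assoc)
qed

lemma triangleE: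
  assumes "t \<in> triangles V E"
  obtains x y z where "t = {x,y,z}" "x \<in> V" "y \<in> V" "z \<in> V" "x \<noteq> y" "y \<noteq> z" "x \<noteq> z"
    "{x,y} \<in> E" "{y,z} \<in> E" "{x,z} \<in> E"
  using assms unfolding triangles_def by blast

lemma simple_finite_E:
  assumes "simple_graph V E" shows "finite E"
proof -
  have "E \<subseteq> Pow V" using assms unfolding simple_graph_def by auto
  then show ?thesis using assms unfolding simple_graph_def by (meson finite_Pow_iff finite_subset)
qed

lemma tau_le:
  assumes "simple_graph V E" "F \<subseteq> E" "\<forall>t\<in>triangles V E. F \<inter> tri_edges t \<noteq> {}"
  shows "tau V E \<le> card F"
proof -
  have fin: "finite {card F | F. F \<subseteq> E \<and> (\<forall>t\<in>triangles V E. F \<inter> tri_edges t \<noteq> {})}"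
  proof -
    have "{card F | F. F \<subseteq> E \<and> (\<forall>t\<in>triangles V E. F \<inter> tri_edges t \<noteq> {})} \<subseteq> card ` Pow E" by auto
    then show ?thesis using simple_finite_E[OF assms(1)] finite_subset by blast
  qed
  show ?thesis unfolding tau_def by (rule Min_le[OF fin]) (use assms in blast)
qed

lemma part1_cover:
  assumes G: "simple_graph V E" and w3: "\<forall>e\<in>E. w e \<le> (3::nat)"
    and wt: "\<forall>t\<in>triangles V E. (\<Sum>e\<in>tri_edges t. w e) \<ge> 3"
  shows "2 * tau V E \<le> (\<Sum>e\<in>E. w e)"
proof -
  have finE: "finite E" using simple_finite_E[OF G] .
  define E2 where "E2 = {e\<in>E. w e \<ge> 2}"
  define E1 where "E1 = {e\<in>E. w e = 1}"
  have fV: "finite V" using G unfolding simple_graph_def by auto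
  have "\<forall>e\<in>E1. e \<subseteq> V \<and> card e = 2" using G unfolding simple_graph_def E1_def by auto
  then obtain S where S: "2 * card {e\<in>E1. e \<subseteq> S \<or> e \<inter> S = {}} \<le> card E1"
    using maxcut[OF fV] by blast
  define F where "F = E2 \<union> {e\<in>E1. e \<subseteq> S \<or> e \<inter> S = {}}"
  have FE: "F \<subseteq> E" unfolding F_def E2_def E1_def by auto
  have hit: "\<forall>t\<in>triangles V E. F \<inter> tri_edges t \<noteq> {}"
  proof
    fix t assume t: "t \<in> triangles V E"
    then obtain x y z where xyz: "t = {x,y,z}" "x \<noteq> y" "y \<noteq> z" "x \<noteq> z"
      "{x,y} \<in> E" "{y,z} \<in> E" "{x,z} \<in> E" by (rule triangleE)
    have s0: "(\<Sum>e\<in>tri_edges t. w e) \<ge> 3" using wt t by blast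
    have s3: "w {x,y} + w {y,z} + w {x,z} \<ge> 3"
      using s0 tri_sum_3[OF xyz(2-4), of w] unfolding xyz(1) by simp
    have te: "tri_edges t = {{x, y}, {y, z}, {x, z}}" using tri_edges_3[OF xyz(2-4)] xyz(1) by simp
    show "F \<inter> tri_edges t \<noteq> {}"
    proof (cases "w {x,y} \<ge> 2 \<or> w {y,z} \<ge> 2 \<or> w {x,z} \<ge> 2")
      case True
      then show ?thesis unfolding te F_def E2_def using xyz by auto
    next
      case False
      then have "w {x,y} = 1" "w {y,z} = 1" "w {x,z} = 1" using s3 by auto
      then have inE1: "{x,y} \<in> E1" "{y,z} \<in> E1" "{x,z} \<in> E1" unfolding E1_def using xyz by auto
      have "({x,y} \<subseteq> S \<or> {x,y} \<inter> S = {}) \<or> ({y,z} \<subseteq> S \<or> {y,z} \<inter> S = {}) \<or> ({x,z} \<subseteq> S \<or> {x,z} \<inter> S = {})"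
        by (cases "x \<in> S"; cases "y \<in> S"; cases "z \<in> S") auto
      then show ?thesis unfolding te F_def using inE1 by blast
    qed
  qed
  have "tau V E \<le> card F" by (rule tau_le[OF G FE hit])
  also have "card F \<le> card E2 + card {e\<in>E1. e \<subseteq> S \<or> e \<inter> S = {}}"
    unfolding F_def by (rule card_Un_le)
  finally have "2 * tau V E \<le> 2 * card E2 + card E1" using S by linarith
  also have "\<dots> \<le> (\<Sum>e\<in>E2. w e) + (\<Sum>e\<in>E1. w e)"
  proof -
    have "2 * card E2 = (\<Sum>e\<in>E2. 2)" by simp
    also have "\<dots> \<le> (\<Sum>e\<in>E2. w e)" by (rule sum_mono) (auto simp: E2_def)
    finally have a: "2 * card E2 \<le> (\<Sum>e\<in>E2. w e)" .
    have "card E1 = (\<Sum>e\<in>E1. w e)" by (simp add: E1_def)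
    then show ?thesis using a by linarith
  qed
  also have "\<dots> = (\<Sum>e\<in>E2 \<union> E1. w e)"
    by (rule sum.union_disjoint[symmetric]) (use finE in \<open>auto simp: E1_def E2_def\<close>)
  also have "\<dots> \<le> (\<Sum>e\<in>E. w e)"
    by (rule sum_mono2[OF finE]) (auto simp: E1_def E2_def)
  finally show ?thesis .
qed

lemma part1:
  assumes G: "simple_graph V E"
  shows "real (tau V E) \<le> 3 / 2 * tau_k 3 V E"
proof -
  define A where "A = {(\<Sum>e\<in>E. real (w e)) / real 3 | w :: 'a set \<Rightarrow> nat.
      (\<forall>e\<in>E. w e \<le> 3) \<and> (\<forall>t\<in>triangles V E. (\<Sum>e\<in>tri_edges t. w e) \<ge> 3)}"
  have ne: "A \<noteq> {}"
  proof -
    have "(\<Sum>e\<in>tri_edges t. (\<lambda>_. 3::nat) e) \<ge> 3" if tT: "t \<in> triangles V E" for t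
    proof -
      obtain x y z where xyz: "t = {x,y,z}" "x \<noteq> y" "y \<noteq> z" "x \<noteq> z"
        by (rule triangleE[OF tT]) blast
      show ?thesis using tri_sum_3[OF xyz(2-4), of "\<lambda>_. 3::nat"] xyz(1) by simp
    qed
    then have "(\<Sum>e\<in>E. real ((\<lambda>_. 3::nat) e)) / real 3 \<in> A" unfolding A_def
      by (intro CollectI exI[of _ "\<lambda>_. 3::nat"]) auto
    then show ?thesis by blast
  qed
  have "2 / 3 * real (tau V E) \<le> Inf A"
  proof (rule cInf_greatest[OF ne])
    fix a assume "a \<in> A"
    then obtain w :: "'a set \<Rightarrow> nat" where w: "\<forall>e\<in>E. w e \<le> 3"
      "\<forall>t\<in>triangles V E. (\<Sum>e\<in>tri_edges t. w e) \<ge> 3" "a = (\<Sum>e\<in>E. real (w e)) / real 3"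
      unfolding A_def by blast
    have "2 * tau V E \<le> (\<Sum>e\<in>E. w e)" using part1_cover[OF G w(1,2)] .
    then have "2 * real (tau V E) \<le> (\<Sum>e\<in>E. real (w e))"
      by (metis (mono_tags, lifting) of_nat_le_iff of_nat_mult of_nat_numeral of_nat_sum)
    then show "2 / 3 * real (tau V E) \<le> a" using w(3) by simp
  qed
  moreover have "tau_k 3 V E = Inf A" unfolding tau_k_def A_def by simp
  ultimately show ?thesis by simp
qed

lemma card_contain:
  assumes P: "finite P" and A: "A \<subseteq> P" and aM: "card A \<le> M"
  shows "card {G. G \<subseteq> P \<and> card G = M \<and> A \<subseteq> G} = (card P - card A) choose (M - card A)"
proof -
  have fA: "finite A" using A P finite_subset by blast
  have "bij_betw (\<lambda>G. G - A) {G. G \<subseteq> P \<and> card G = M \<and> A \<subseteq> G} {B. B \<subseteq> P - A \<and> card B = M - card A}"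
    apply (rule bij_betw_byWitness[where f' = "\<lambda>B. B \<union> A"])
    subgoal by blast
    subgoal by blast
    subgoal using fA P by (auto intro: card_Diff_subset dest: finite_subset)
    subgoal
    proof (rule image_subsetI)
      fix B assume "B \<in> {B. B \<subseteq> P - A \<and> card B = M - card A}"
      then have B: "B \<subseteq> P - A" "card B = M - card A" by auto
      have "finite B" using B P finite_subset by blast
      then have "card (B \<union> A) = card B + card A" using B fA by (subst card_Un_disjoint) auto
      then show "B \<union> A \<in> {G. G \<subseteq> P \<and> card G = M \<and> A \<subseteq> G}" using B A aM by auto
    qed
    done
  then have "card {G. G \<subseteq> P \<and> card G = M \<and> A \<subseteq> G} = card {B. B \<subseteq> P - A \<and> card B = M - card A}"
    by (rule bij_betw_same_card)
  also have "\<dots> = card (P - A) choose (M - card A)" using P by (simp add: n_subsets)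
  also have "card (P - A) = card P - card A" using A fA by (simp add: card_Diff_subset)
  finally show ?thesis .
qed

lemma card_avoid:
  assumes P: "finite P" and A: "A \<subseteq> P"
  shows "card {G. G \<subseteq> P \<and> card G = M \<and> G \<inter> A = {}} = (card P - card A) choose M"
proof -
  have fA: "finite A" using A P finite_subset by blast
  have "{G. G \<subseteq> P \<and> card G = M \<and> G \<inter> A = {}} = {G. G \<subseteq> P - A \<and> card G = M}" by blast
  then have "card {G. G \<subseteq> P \<and> card G = M \<and> G \<inter> A = {}} = card (P - A) choose M"
    using P by (simp add: n_subsets)
  also have "card (P - A) = card P - card A" using A fA by (simp add: card_Diff_subset)
  finally show ?thesis .
qed

lemma double_count:
  assumes "finite \<G>" "finite \<X>"
  shows "(\<Sum>G\<in>\<G>. card {X\<in>\<X>. R X G}) = (\<Sum>X\<in>\<X>. card {G\<in>\<G>. R X G})"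
proof -
  have cf: "card {x\<in>A. P x} = (\<Sum>x\<in>A. if P x then 1 else 0)" if "finite A" for A and P :: "'z \<Rightarrow> bool"
    using sum.inter_filter[OF that, of "\<lambda>_. (1::nat)" P] by simp
  have "(\<Sum>G\<in>\<G>. card {X\<in>\<X>. R X G}) = (\<Sum>G\<in>\<G>. \<Sum>X\<in>\<X>. if R X G then 1 else 0)"
    using cf[OF assms(2)] by simp
  also have "\<dots> = (\<Sum>X\<in>\<X>. \<Sum>G\<in>\<G>. if R X G then 1 else 0)" by (rule sum.swap)
  also have "\<dots> = (\<Sum>X\<in>\<X>. card {G\<in>\<G>. R X G})"
    using cf[OF assms(1)] by simp
  finally show ?thesis .
qed

lemma binom_ratio1:
  assumes "j \<le> M" "M \<le> N"
  shows "real ((N - j) choose (M - j)) \<le> real (N choose M) * (real M / real N) ^ j"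
  using assms(1)
proof (induction j)
  case 0 then show ?case by simp
next
  case (Suc j)
  define a where "a = N - j"
  define b where "b = M - j"
  have b1: "b \<ge> 1" using Suc.prems unfolding b_def by simp
  have ab: "b \<le> a" using assms(2) Suc.prems unfolding a_def b_def by simp
  have eq: "b * (a choose b) = a * ((a - 1) choose (b - 1))"
    using times_binomial_minus1_eq[of b a] b1 by simp
  have Npos: "N > 0" using Suc.prems assms by simp
  have apos: "a > 0" using ab b1 by simp
  have "real a * real ((a - 1) choose (b - 1)) = real b * real (a choose b)"
    using eq by (metis of_nat_mult)
  then have "real ((a - 1) choose (b - 1)) = real (a choose b) * (real b / real a)"
    using apos by (simp add: field_simps)
  also have "real b / real a \<le> real M / real N"
  proof -
    have "real b * real N \<le> real M * real a"
    proof -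
      have rb: "real b = real M - real j" unfolding b_def using Suc.prems by (simp add: of_nat_diff)
      have ra: "real a = real N - real j" unfolding a_def using Suc.prems assms(2) by (simp add: of_nat_diff)
      have "real j * real M \<le> real j * real N" using assms(2) by (simp add: mult_left_mono)
      then show ?thesis unfolding rb ra by (simp add: algebra_simps)
    qed
    then show ?thesis using apos Npos by (simp add: divide_simps)
  qed
  then have "real (a choose b) * (real b / real a) \<le> real (a choose b) * (real M / real N)"
    by (rule mult_left_mono) simp
  finally have "real ((a - 1) choose (b - 1)) \<le> real (a choose b) * (real M / real N)" .
  also have "\<dots> \<le> real (N choose M) * (real M / real N) ^ j * (real M / real N)"
    using Suc.IH Suc.prems unfolding a_def b_def by (intro mult_right_mono) auto
  finally show ?case unfolding a_def b_def by (simp add: algebra_simps)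
qed

lemma binom_ratio2:
  assumes "M \<le> N"
  shows "real ((N - q) choose M) \<le> real (N choose M) * (1 - real M / real N) ^ q"
proof (cases "M = 0")
  case True then show ?thesis by simp
next
  case M0: False
  have MN1: "real M / real N \<le> 1"
    using assms by (cases "N = 0") (simp_all add: divide_le_eq_1)
  then have nn: "0 \<le> 1 - real M / real N" by linarith
  show ?thesis
  proof (induction q)
    case 0 then show ?case by simp
  next
    case (Suc q)
    show ?case
    proof (cases "Suc q + M \<le> N")
      case False
      then have "N - Suc q < M" using M0 by simp
      then have z: "(N - Suc q) choose M = 0" by (simp add: binomial_eq_0)
      have "0 \<le> real (N choose M) * (1 - real M / real N) ^ Suc q"
        using nn by simp
      then show ?thesis by (simp only: z of_nat_0)
    next
      case True
      define a where "a = N - q"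
      have aM: "a > M" using True unfolding a_def by simp
      have aN: "a \<le> N" unfolding a_def by simp
      have am1: "a - 1 = N - Suc q" unfolding a_def by simp
      have eq: "(a - M) * (a choose M) = a * ((a - 1) choose M)" by (rule binomial_absorb_comp)
      have "real a * real ((a - 1) choose M) = real (a - M) * real (a choose M)"
        using eq by (metis of_nat_mult)
      then have "real a * real ((a - 1) choose M) = (real a - real M) * real (a choose M)"
        using aM by (simp add: of_nat_diff)
      then have "real ((a - 1) choose M) = real (a choose M) * (1 - real M / real a)"
        using aM by (simp add: field_simps)
      also have "1 - real M / real a \<le> 1 - real M / real N"
      proof -
        have "real M / real N \<le> real M / real a"
          by (rule divide_left_mono) (use aM aN in auto)
        then show ?thesis by linarith
      qed
      then have "real (a choose M) * (1 - real M / real a) \<le> real (a choose M) * (1 - real M / real N)"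
        by (rule mult_left_mono) simp
      also have "\<dots> \<le> real (N choose M) * (1 - real M / real N) ^ q * (1 - real M / real N)"
        using Suc.IH nn unfolding a_def by (intro mult_right_mono) auto
      also have "\<dots> = real (N choose M) * (1 - real M / real N) ^ Suc q"
        by (simp only: power_Suc2 mult.assoc)
      finally show ?thesis unfolding am1 .
    qed
  qed
qed
lemma tri_edges_card:
  assumes "finite X" shows "card (tri_edges X) = card X choose 2"
  unfolding tri_edges_def using n_subsets[OF assms, of 2] by simp

lemma triangles_char:
  "triangles Y H = {X. X \<subseteq> Y \<and> card X = 3 \<and> tri_edges X \<subseteq> H}"
proof
  show "triangles Y H \<subseteq> {X. X \<subseteq> Y \<and> card X = 3 \<and> tri_edges X \<subseteq> H}"
  proof
    fix t assume "t \<in> triangles Y H"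
    then obtain x y z where xyz: "t = {x,y,z}" "x \<in> Y" "y \<in> Y" "z \<in> Y" "x \<noteq> y" "y \<noteq> z" "x \<noteq> z"
      "{x,y} \<in> H" "{y,z} \<in> H" "{x,z} \<in> H" unfolding triangles_def by blast
    have "tri_edges t = {{x, y}, {y, z}, {x, z}}" using tri_edges_3[OF xyz(5-7)] xyz(1) by simp
    then show "t \<in> {X. X \<subseteq> Y \<and> card X = 3 \<and> tri_edges X \<subseteq> H}" using xyz by auto
  qed
  show "{X. X \<subseteq> Y \<and> card X = 3 \<and> tri_edges X \<subseteq> H} \<subseteq> triangles Y H"
  proof
    fix X assume X: "X \<in> {X. X \<subseteq> Y \<and> card X = 3 \<and> tri_edges X \<subseteq> H}"
    then obtain x y z where xyz: "X = {x,y,z}" "x \<noteq> y" "y \<noteq> z" "x \<noteq> z" by (auto simp: card_3_iff)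
    have te: "tri_edges X = {{x, y}, {y, z}, {x, z}}" using tri_edges_3[OF xyz(2-4)] xyz(1) by simp
    have "tri_edges X \<subseteq> H" using X by simp
    then have ed: "{x,y} \<in> H" "{y,z} \<in> H" "{x,z} \<in> H" unfolding te by auto
    have vs: "x \<in> Y" "y \<in> Y" "z \<in> Y" using X xyz(1) by auto
    show "X \<in> triangles Y H" unfolding triangles_def xyz(1)
      by (rule CollectI, rule exI[of _ x], rule exI[of _ y], rule exI[of _ z]) (use ed vs xyz in simp)
  qed
qed

lemma exists_graph:
  fixes Y :: "'a set" and M t :: nat and K :: real
  assumes fY: "finite Y" and Kpos: "K > 0" and M3: "3 \<le> M" and MN: "M \<le> card (tri_edges Y)"
    and ineq: "real (card Y choose 3) * real ((card (tri_edges Y) - 3) choose (M - 3))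
       + K * (real (card Y choose t) * real ((card (tri_edges Y) - (t choose 2)) choose M))
       < K * real (card (tri_edges Y) choose M)"
  shows "\<exists>H \<subseteq> tri_edges Y. (\<forall>S. S \<subseteq> Y \<and> card S = t \<longrightarrow> tri_edges S \<inter> H \<noteq> {})
            \<and> real (card (triangles Y H)) < K"
proof -
  define P where "P = tri_edges Y"
  define N where "N = card P"
  have fP: "finite P" unfolding P_def tri_edges_def using fY by simp
  define \<G> where "\<G> = {G. G \<subseteq> P \<and> card G = M}"
  define X3 where "X3 = {X. X \<subseteq> Y \<and> card X = 3}"
  define Xt where "Xt = {X. X \<subseteq> Y \<and> card X = t}"
  have fG: "finite \<G>" unfolding \<G>_def using fP by simp
  have fX3: "finite X3" unfolding X3_def using fY by simp
  have fXt: "finite Xt" unfolding Xt_def using fY by simp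
  have cG: "card \<G> = N choose M" unfolding \<G>_def N_def using n_subsets[OF fP] by simp
  have cX3: "card X3 = card Y choose 3" unfolding X3_def using n_subsets[OF fY] by simp
  have cXt: "card Xt = card Y choose t" unfolding Xt_def using n_subsets[OF fY] by simp
  have sub: "tri_edges X \<subseteq> P" if "X \<subseteq> Y" for X unfolding P_def tri_edges_def using that by auto
  have fin_edges: "finite X \<Longrightarrow> card (tri_edges X) = card X choose 2" for X :: "'a set"
    by (rule tri_edges_card)
  have tri_eq: "triangles Y G = {X\<in>X3. tri_edges X \<subseteq> G}" for G
    unfolding triangles_char X3_def by auto
  have S1: "(\<Sum>G\<in>\<G>. card (triangles Y G)) = (card Y choose 3) * ((N - 3) choose (M - 3))"
  proof -
    have "(\<Sum>G\<in>\<G>. card (triangles Y G)) = (\<Sum>G\<in>\<G>. card {X\<in>X3. tri_edges X \<subseteq> G})"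
      unfolding tri_eq ..
    also have "\<dots> = (\<Sum>X\<in>X3. card {G\<in>\<G>. tri_edges X \<subseteq> G})"
      by (rule double_count[OF fG fX3])
    also have "\<dots> = (\<Sum>X\<in>X3. (N - 3) choose (M - 3))"
    proof (rule sum.cong[OF refl])
      fix X assume X: "X \<in> X3"
      then have XY: "X \<subseteq> Y" and c3: "card X = 3" unfolding X3_def by auto
      have fX: "finite X" using XY fY finite_subset by blast
      have c32: "(3::nat) choose 2 = 3" by (simp add: numeral_eq_Suc)
      have ce: "card (tri_edges X) = 3" using fin_edges[OF fX] c3 c32 by simp
      have "{G\<in>\<G>. tri_edges X \<subseteq> G} = {G. G \<subseteq> P \<and> card G = M \<and> tri_edges X \<subseteq> G}"
        unfolding \<G>_def by auto
      then show "card {G\<in>\<G>. tri_edges X \<subseteq> G} = (N - 3) choose (M - 3)"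
        using card_contain[OF fP sub[OF XY], of M] ce M3 unfolding N_def by simp
    qed
    also have "\<dots> = (card Y choose 3) * ((N - 3) choose (M - 3))" using cX3 by simp
    finally show ?thesis .
  qed
  define I where "I = (\<lambda>G. {S\<in>Xt. tri_edges S \<inter> G = {}})"
  have S2: "(\<Sum>G\<in>\<G>. card (I G)) = (card Y choose t) * ((N - (t choose 2)) choose M)"
  proof -
    have "(\<Sum>G\<in>\<G>. card (I G)) = (\<Sum>X\<in>Xt. card {G\<in>\<G>. tri_edges X \<inter> G = {}})"
      unfolding I_def by (rule double_count[OF fG fXt])
    also have "\<dots> = (\<Sum>X\<in>Xt. (N - (t choose 2)) choose M)"
    proof (rule sum.cong[OF refl])
      fix X assume X: "X \<in> Xt"
      then have XY: "X \<subseteq> Y" and c3: "card X = t" unfolding Xt_def by auto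
      have fX: "finite X" using XY fY finite_subset by blast
      have ce: "card (tri_edges X) = t choose 2" using fin_edges[OF fX] c3 by simp
      have "{G\<in>\<G>. tri_edges X \<inter> G = {}} = {G. G \<subseteq> P \<and> card G = M \<and> G \<inter> tri_edges X = {}}"
        unfolding \<G>_def by auto
      then show "card {G\<in>\<G>. tri_edges X \<inter> G = {}} = (N - (t choose 2)) choose M"
        using card_avoid[OF fP sub[OF XY], of M] ce unfolding N_def by simp
    qed
    also have "\<dots> = (card Y choose t) * ((N - (t choose 2)) choose M)" using cXt by simp
    finally show ?thesis .
  qed
  have "(\<Sum>G\<in>\<G>. real (card (triangles Y G)) + K * real (card (I G)))
        = real (\<Sum>G\<in>\<G>. card (triangles Y G)) + K * real (\<Sum>G\<in>\<G>. card (I G))"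
    by (simp add: sum.distrib sum_distrib_left)
  also have "\<dots> < K * real (card \<G>)"
    unfolding S1 S2 cG using ineq unfolding N_def P_def by simp
  finally have lt: "(\<Sum>G\<in>\<G>. real (card (triangles Y G)) + K * real (card (I G))) < K * real (card \<G>)" .
  have "\<exists>G\<in>\<G>. real (card (triangles Y G)) + K * real (card (I G)) < K"
  proof (rule ccontr)
    assume "\<not> ?thesis"
    then have "\<forall>G\<in>\<G>. K \<le> real (card (triangles Y G)) + K * real (card (I G))" by auto
    then have "(\<Sum>G\<in>\<G>. K) \<le> (\<Sum>G\<in>\<G>. real (card (triangles Y G)) + K * real (card (I G)))"
      by (intro sum_mono) auto
    then show False using lt by (simp add: mult.commute)
  qed
  then obtain G where G: "G \<in> \<G>" "real (card (triangles Y G)) + K * real (card (I G)) < K" by blast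
  have "card (I G) = 0"
  proof (rule ccontr)
    assume "card (I G) \<noteq> 0"
    then have "K * 1 \<le> K * real (card (I G))" using Kpos by (intro mult_left_mono) auto
    then show False using G(2) by simp
  qed
  then have "I G = {}" using fXt unfolding I_def by simp
  then have indep: "\<forall>S. S \<subseteq> Y \<and> card S = t \<longrightarrow> tri_edges S \<inter> G \<noteq> {}"
    unfolding I_def Xt_def by blast
  have "real (card (triangles Y G)) < K" using G(2) Kpos by (smt (verit) of_nat_0_le_iff mult_nonneg_nonneg)
  moreover have "G \<subseteq> tri_edges Y" using G(1) unfolding \<G>_def P_def by simp
  ultimately show ?thesis using indep by blast
qed

lemma pow_ge_lin: "k \<ge> 7 \<Longrightarrow> 16 * k + 5 \<le> (2::nat) ^ k"
proof (induction k rule: dec_induct)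
  case base then show ?case by simp
next
  case (step n) then show ?case by simp
qed

lemma exp_bound:
  fixes y :: nat
  shows "2 * 2 ^ (4 * y) \<le> exp (real (8 * y + 2))"
proof -
  have e2: "3 \<le> exp (2::real)" using exp_ge_add_one_self[of 2] by simp
  have "exp (real (8 * y + 2)) = exp 2 ^ (4 * y + 1)"
    using exp_of_nat_mult[of "4 * y + 1" 2] by (simp add: algebra_simps)
  also have "\<dots> \<ge> 3 ^ (4 * y + 1)" by (rule power_mono[OF e2]) simp
  finally have a: "exp (real (8 * y + 2)) \<ge> 3 ^ (4 * y + 1)" .
  have "(2::real) ^ (4 * y) \<le> 3 ^ (4 * y)" by (rule power_mono) auto
  moreover have "(0::real) \<le> 2 ^ (4 * y)" by simp
  moreover have "(3::real) ^ (4 * y + 1) = 3 * 3 ^ (4 * y)" by simp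
  ultimately have "2 * 2 ^ (4 * y) \<le> (3::real) ^ (4 * y + 1)" by linarith
  then show ?thesis using a by linarith
qed

lemma one_minus_pow_exp:
  fixes p :: real assumes "0 \<le> p" "p \<le> 1"
  shows "(1 - p) ^ q \<le> exp (- (real q * p))"
proof -
  have "(1 - p) ^ q \<le> exp (- p) ^ q"
    by (rule power_mono) (use exp_ge_add_one_self[of "-p"] assms in auto)
  also have "\<dots> = exp (- (real q * p))" using exp_of_nat_mult[of q "-p"] by simp
  finally show ?thesis .
qed

lemma numeric:
  fixes k :: nat assumes k7: "k \<ge> 7"
  defines "m \<equiv> (2::nat) ^ (4 * k)" and "M \<equiv> 2 ^ (k - 1) * (2 ^ (4 * k) - 1)"
    and "t \<equiv> 2 ^ (3 * k + 2) * (4 * k + 1) + 1" and "K \<equiv> 4 * (2::real) ^ (3 * k)"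
  shows "3 \<le> M" "M \<le> m choose 2" "t \<le> m"
    "real (m choose 3) * real (((m choose 2) - 3) choose (M - 3))
       + K * (real (m choose t) * real (((m choose 2) - (t choose 2)) choose M))
       < K * real ((m choose 2) choose M)"
proof -
  define P :: nat where "P = 2 ^ (3 * k)"
  define N where "N = m choose 2"
  have Ppos: "P \<ge> 1" unfolding P_def by simp
  have m2: "m \<ge> 2"
  proof -
    have "(2::nat) ^ 1 \<le> 2 ^ (4 * k)" by (rule power_increasing) (use k7 in auto)
    then show ?thesis unfolding m_def by simp
  qed
  have NPM: "N = P * M"
  proof -
    have a: "P * 2 ^ (k - 1) * 2 = m" unfolding P_def m_def using k7
      by (simp add: power_add[symmetric] power_Suc2[symmetric])
    have "m * (m - 1) = 2 * (P * M)" unfolding M_def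
      using a m_def by (metis mult.assoc mult.commute)
    then show ?thesis unfolding N_def choose_two by simp
  qed
  have M3: "3 \<le> M"
  proof -
    have "(1::nat) \<le> 2 ^ (k - 1)" by simp
    moreover have "(3::nat) \<le> 2 ^ (4 * k) - 1"
    proof -
      have "(2::nat) ^ 2 \<le> 2 ^ (4 * k)" by (rule power_increasing) (use k7 in auto)
      then show ?thesis by simp
    qed
    ultimately have "1 * 3 \<le> 2 ^ (k - 1) * (2 ^ (4 * k) - (1::nat))" by (rule mult_le_mono)
    then show ?thesis unfolding M_def by simp
  qed
  then show "3 \<le> M" .
  have MN: "M \<le> N" using NPM Ppos by simp
  then show "M \<le> m choose 2" unfolding N_def .
  have tm: "t \<le> m"
  proof -
    have "t = 2 ^ (3 * k) * (4 * (4 * k + 1)) + 1" unfolding t_def by (simp add: power_add algebra_simps)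
    also have "\<dots> \<le> 2 ^ (3 * k) * (16 * k + 5)"
    proof -
      have "(1::nat) \<le> 2 ^ (3 * k)" by simp
      then show ?thesis by (simp add: algebra_simps)
    qed
    also have "\<dots> \<le> 2 ^ (3 * k) * 2 ^ k" using pow_ge_lin[OF k7] by simp
    also have "\<dots> = m" unfolding m_def by (simp add: power_add[symmetric])
    finally show ?thesis .
  qed
  then show "t \<le> m" .
  have Mpos: "M > 0" using M3 by simp
  have ratio: "real M / real N = 1 / real P" using NPM Mpos by (simp add: field_simps)
  have CNMpos: "real (N choose M) > 0" using MN by simp
  have A: "real (m choose 3) * real ((N - 3) choose (M - 3)) \<le> K / 4 * real (N choose M)"
  proof -
    have c3: "real (m choose 3) \<le> real m ^ 3"
    proof -
      have "(2::nat) ^ 2 \<le> 2 ^ (4 * k)" by (rule power_increasing) (use k7 in auto)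
      then have "3 \<le> m" unfolding m_def by simp
      then have "m choose 3 \<le> m ^ 3" by (rule binomial_le_pow)
      then show ?thesis by (metis of_nat_le_iff of_nat_power)
    qed
    have b: "real ((N - 3) choose (M - 3)) \<le> real (N choose M) * (real M / real N) ^ 3"
      by (rule binom_ratio1[OF M3 MN])
    have "real (m choose 3) * real ((N - 3) choose (M - 3)) \<le> real m ^ 3 * (real (N choose M) * (1 / real P) ^ 3)"
      using c3 b unfolding ratio by (intro mult_mono) auto
    also have "real m ^ 3 * (1 / real P) ^ 3 = K / 4"
    proof -
      have "real m ^ 3 = real P ^ 3 * 2 ^ (3 * k)" unfolding m_def P_def
        by (simp add: power_mult[symmetric] power_add[symmetric] algebra_simps)
      then show ?thesis unfolding K_def using Ppos by (simp add: field_simps)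
    qed
    then have "real m ^ 3 * (real (N choose M) * (1 / real P) ^ 3) = K / 4 * real (N choose M)"
      by (metis mult.assoc mult.commute)
    finally show ?thesis .
  qed
  have B: "real (m choose t) * real ((N - (t choose 2)) choose M) \<le> 1 / 2 * real (N choose M)"
  proof -
    define q where "q = t choose 2"
    have t1: "t - 1 = P * (4 * (4 * k + 1))" unfolding t_def P_def by (simp add: power_add algebra_simps)
    have qP: "q = P * (8 * k * t + 2 * t)"
    proof -
      have "t * (t - 1) = 2 * (P * (8 * k * t + 2 * t))" unfolding t1 by (simp add: algebra_simps)
      then show ?thesis unfolding q_def choose_two by simp
    qed
    have c1: "real (m choose t) \<le> 2 ^ (4 * (k * t))"
    proof -
      have "m choose t \<le> m ^ t" by (rule binomial_le_pow[OF tm])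
      also have "m ^ t = 2 ^ (4 * (k * t))" unfolding m_def by (simp add: power_mult[symmetric] mult.assoc)
      finally show ?thesis by (metis of_nat_le_iff of_nat_numeral of_nat_power)
    qed
    have pr: "0 \<le> 1 / real P" "1 / real P \<le> 1" using Ppos by auto
    have c2: "real ((N - q) choose M) \<le> real (N choose M) * exp (- real (8 * (k * t) + 2 * t))"
    proof -
      have "real ((N - q) choose M) \<le> real (N choose M) * (1 - 1 / real P) ^ q"
        using binom_ratio2[OF MN, of q] unfolding ratio .
      also have "(1 - 1 / real P) ^ q \<le> exp (- (real q * (1 / real P)))"
        by (rule one_minus_pow_exp[OF pr])
      also have "real q * (1 / real P) = real (8 * (k * t) + 2 * t)"
        unfolding qP using Ppos by (simp add: field_simps)
      finally show ?thesis using CNMpos by (simp add: mult_left_mono)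
    qed
    have e: "2 ^ (4 * (k * t)) * exp (- real (8 * (k * t) + 2 * t)) \<le> (1 / 2 :: real)"
    proof -
      have "2 * 2 ^ (4 * (k * t)) \<le> exp (real (8 * (k * t) + 2))" by (rule exp_bound)
      also have "\<dots> \<le> exp (real (8 * (k * t) + 2 * t))" using tm t_def by simp
      finally have h: "2 * 2 ^ (4 * (k * t)) \<le> exp (real (8 * (k * t) + 2 * t))" .
      define E where "E = exp (real (8 * (k * t) + 2 * t))"
      have Epos: "E > 0" unfolding E_def by simp
      have "2 ^ (4 * (k * t)) * exp (- real (8 * (k * t) + 2 * t)) = 2 ^ (4 * (k * t)) / E"
        unfolding E_def by (simp only: exp_minus divide_inverse)
      also have "\<dots> \<le> 1 / 2" using h Epos unfolding E_def[symmetric] by (simp add: pos_divide_le_eq)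
      finally show ?thesis .
    qed
    have "real (m choose t) * real ((N - q) choose M) \<le> 2 ^ (4 * (k * t)) * (real (N choose M) * exp (- real (8 * (k * t) + 2 * t)))"
      using c1 c2 by (intro mult_mono) auto
    also have "\<dots> = (2 ^ (4 * (k * t)) * exp (- real (8 * (k * t) + 2 * t))) * real (N choose M)" by simp
    also have "\<dots> \<le> 1 / 2 * real (N choose M)" using e CNMpos by (intro mult_right_mono) auto
    finally show ?thesis unfolding q_def .
  qed
  have Kpos: "K > 0" unfolding K_def by simp
  have "real (m choose 3) * real ((N - 3) choose (M - 3))
       + K * (real (m choose t) * real ((N - (t choose 2)) choose M))
       \<le> K / 4 * real (N choose M) + K * (1 / 2 * real (N choose M))"
    using A B Kpos by (intro add_mono mult_left_mono) auto
  also have "\<dots> < K * real (N choose M)" using Kpos CNMpos by (simp add: field_simps)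
  finally show "real (m choose 3) * real (((m choose 2) - 3) choose (M - 3))
       + K * (real (m choose t) * real (((m choose 2) - (t choose 2)) choose M))
       < K * real ((m choose 2) choose M)" unfolding N_def .
qed

definition Eg :: "nat \<Rightarrow> nat set set \<Rightarrow> nat set set" where
  "Eg m H = H \<union> (\<lambda>y. {y, m}) ` {0..<m}"

lemma tri_edges_mem: "e \<in> tri_edges X \<longleftrightarrow> e \<subseteq> X \<and> card e = 2"
  unfolding tri_edges_def by simp

lemma H_edge:
  assumes "H \<subseteq> tri_edges {0..<m}" "e \<in> H"
  obtains a b where "e = {a, b}" "a \<noteq> b" "a < m" "b < m"
proof -
  have "e \<subseteq> {0..<m}" "card e = 2" using assms unfolding tri_edges_def by auto
  then obtain a b where "e = {a,b}" "a \<noteq> b" by (auto simp: card_2_iff)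
  then show ?thesis using that \<open>e \<subseteq> {0..<m}\<close> by auto
qed

lemma Eg_simple:
  assumes "H \<subseteq> tri_edges {0..<m}"
  shows "simple_graph {0..m} (Eg m H)"
proof -
  have "e \<subseteq> {0..m} \<and> card e = 2" if e: "e \<in> Eg m H" for e
  proof (cases "e \<in> H")
    case True
    then have "e \<subseteq> {0..<m}" "card e = 2" using assms unfolding tri_edges_def by auto
    then show ?thesis by auto
  next
    case False
    then obtain y where "y < m" "e = {y, m}" using e unfolding Eg_def by auto
    then show ?thesis by auto
  qed
  then show ?thesis unfolding simple_graph_def by auto
qed

lemma Eg_edge_cases:
  assumes "H \<subseteq> tri_edges {0..<m}" "{a, b} \<in> Eg m H" "a \<noteq> b"
  shows "(a \<noteq> m \<and> b \<noteq> m \<and> {a, b} \<in> H) \<or> (a = m \<and> b < m) \<or> (b = m \<and> a < m)"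
proof -
  from assms(2) consider "{a,b} \<in> H" | y where "y < m" "{a,b} = {y, m}" unfolding Eg_def by auto
  then show ?thesis
  proof cases
    case 1
    then have "{a,b} \<subseteq> {0..<m}" using assms(1) unfolding tri_edges_def by auto
    then show ?thesis using 1 by auto
  next
    case 2
    then show ?thesis using assms(3) by (auto simp: doubleton_eq_iff)
  qed
qed

lemma Eg_triangle_cases:
  assumes HY: "H \<subseteq> tri_edges {0..<m}" and t: "t \<in> triangles {0..m} (Eg m H)"
  shows "(\<exists>a b. a < m \<and> b < m \<and> a \<noteq> b \<and> {a, b} \<in> H \<and> t = {a, b, m}) \<or> t \<in> triangles {0..<m} H"
proof -
  obtain x y z where xyz: "t = {x,y,z}" "x \<in> {0..m}" "y \<in> {0..m}" "z \<in> {0..m}" "x \<noteq> y" "y \<noteq> z" "x \<noteq> z"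
    "{x,y} \<in> Eg m H" "{y,z} \<in> Eg m H" "{x,z} \<in> Eg m H" by (rule triangleE[OF t])
  note c1 = Eg_edge_cases[OF HY xyz(8) xyz(5)]
  note c2 = Eg_edge_cases[OF HY xyz(9) xyz(6)]
  note c3 = Eg_edge_cases[OF HY xyz(10) xyz(7)]
  show ?thesis
  proof (cases "x = m \<or> y = m \<or> z = m")
    case True
    then show ?thesis
    proof (elim disjE)
      assume "x = m"
      then have "{y,z} \<in> H" "y < m" "z < m" using c1 c2 c3 xyz by auto
      then show ?thesis using xyz \<open>x = m\<close> by (intro disjI1 exI[of _ y] exI[of _ z]) auto
    next
      assume "y = m"
      then have "{x,z} \<in> H" "x < m" "z < m" using c1 c2 c3 xyz by auto
      then show ?thesis using xyz \<open>y = m\<close> by (intro disjI1 exI[of _ x] exI[of _ z]) auto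
    next
      assume "z = m"
      then have "{x,y} \<in> H" "x < m" "y < m" using c1 c2 c3 xyz by auto
      then show ?thesis using xyz \<open>z = m\<close> by (intro disjI1 exI[of _ x] exI[of _ y]) auto
    qed
  next
    case False
    then have h: "{x,y} \<in> H" "{y,z} \<in> H" "{x,z} \<in> H" "x < m" "y < m" "z < m"
      using c1 c2 c3 xyz by auto
    have "t \<in> triangles {0..<m} H" unfolding triangles_def xyz(1)
      by (rule CollectI, rule exI[of _ x], rule exI[of _ y], rule exI[of _ z]) (use h xyz in simp)
    then show ?thesis by simp
  qed
qed

lemma Eg_apex_triangle:
  assumes HY: "H \<subseteq> tri_edges {0..<m}" and ab: "a < m" "b < m" "a \<noteq> b" "{a, b} \<in> H"
  shows "{a, b, m} \<in> triangles {0..m} (Eg m H)"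
proof -
  have "{a,b} \<in> Eg m H" "{b,m} \<in> Eg m H" "{a,m} \<in> Eg m H" using ab unfolding Eg_def by auto
  then show ?thesis unfolding triangles_def
    by (rule_tac CollectI, rule_tac exI[of _ a], rule_tac exI[of _ b], rule_tac exI[of _ m]) (use ab in simp)
qed

lemma H_tri_in_Eg:
  assumes "t \<in> triangles {0..<m} H"
  shows "t \<in> triangles {0..m} (Eg m H)"
proof -
  obtain x y z where xyz: "t = {x,y,z}" "x \<in> {0..<m}" "y \<in> {0..<m}" "z \<in> {0..<m}" "x \<noteq> y" "y \<noteq> z" "x \<noteq> z"
    "{x,y} \<in> H" "{y,z} \<in> H" "{x,z} \<in> H" by (rule triangleE[OF assms])
  then show ?thesis unfolding triangles_def Eg_def
    by (rule_tac CollectI, rule_tac exI[of _ x], rule_tac exI[of _ y], rule_tac exI[of _ z]) simp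
qed

lemma tau_attained:
  assumes G: "simple_graph V E"
  obtains F where "F \<subseteq> E" "\<forall>t\<in>triangles V E. F \<inter> tri_edges t \<noteq> {}" "tau V E = card F"
proof -
  define A where "A = {card F | F. F \<subseteq> E \<and> (\<forall>t\<in>triangles V E. F \<inter> tri_edges t \<noteq> {})}"
  have fin: "finite A"
  proof -
    have "A \<subseteq> card ` Pow E" unfolding A_def by auto
    then show ?thesis using simple_finite_E[OF G] finite_subset by blast
  qed
  have "\<forall>t\<in>triangles V E. E \<inter> tri_edges t \<noteq> {}"
  proof
    fix t assume "t \<in> triangles V E"
    then obtain x y z where xyz: "t = {x,y,z}" "x \<noteq> y" "y \<noteq> z" "x \<noteq> z" "{x,y} \<in> E"
      by (rule triangleE) blast
    then have "{x,y} \<in> tri_edges t" unfolding tri_edges_def by auto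
    then show "E \<inter> tri_edges t \<noteq> {}" using xyz by blast
  qed
  then have ne: "A \<noteq> {}" unfolding A_def by blast
  have "tau V E \<in> A" unfolding tau_def A_def[symmetric] by (rule Min_in[OF fin ne])
  then show ?thesis using that unfolding A_def by blast
qed

lemma tau_upper:
  assumes HY: "H \<subseteq> tri_edges {0..<m}"
  shows "tau {0..m} (Eg m H) \<le> m + card (triangles {0..<m} H)"
proof -
  define T where "T = triangles {0..<m} H"
  define f where "f = (\<lambda>t. SOME e. e \<in> tri_edges t \<and> e \<in> H)"
  have fT: "f t \<in> tri_edges t \<and> f t \<in> H" if tT: "t \<in> T" for t
  proof -
    obtain x y z where xyz: "t = {x,y,z}" "x \<noteq> y" "y \<noteq> z" "x \<noteq> z" "{x,y} \<in> H"
      using tT unfolding T_def by (rule triangleE) blast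
    then have "{x,y} \<in> tri_edges t \<and> {x,y} \<in> H" unfolding tri_edges_def by auto
    then show ?thesis unfolding f_def by (rule someI)
  qed
  define F where "F = (\<lambda>y. {y, m}) ` {0..<m} \<union> f ` T"
  have FE: "F \<subseteq> Eg m H" unfolding F_def Eg_def using fT by auto
  have hit: "\<forall>t\<in>triangles {0..m} (Eg m H). F \<inter> tri_edges t \<noteq> {}"
  proof
    fix t assume t: "t \<in> triangles {0..m} (Eg m H)"
    from Eg_triangle_cases[OF HY t] show "F \<inter> tri_edges t \<noteq> {}"
    proof
      assume "\<exists>a b. a < m \<and> b < m \<and> a \<noteq> b \<and> {a, b} \<in> H \<and> t = {a, b, m}"
      then obtain a b where ab: "a < m" "t = {a, b, m}" by blast
      then have "{a, m} \<in> F" "{a, m} \<in> tri_edges t" unfolding F_def tri_edges_def by auto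
      then show ?thesis by blast
    next
      assume "t \<in> triangles {0..<m} H"
      then have "f t \<in> F" "f t \<in> tri_edges t" using fT unfolding F_def T_def by auto
      then show ?thesis by blast
    qed
  qed
  have "tau {0..m} (Eg m H) \<le> card F" by (rule tau_le[OF Eg_simple[OF HY] FE hit])
  also have "card F \<le> card ((\<lambda>y. {y, m}) ` {0..<m}) + card (f ` T)" unfolding F_def by (rule card_Un_le)
  also have "\<dots> \<le> m + card T"
  proof -
    have "T \<subseteq> Pow {0..<m}" unfolding T_def triangles_char by auto
    then have finT: "finite T" by (rule finite_subset) simp
    have "card ((\<lambda>y. {y, m}) ` {0..<m}) \<le> m" using card_image_le[of "{0..<m}" "\<lambda>y. {y, m}"] by simp
    moreover have "card (f ` T) \<le> card T" by (rule card_image_le[OF finT])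
    ultimately show ?thesis by simp
  qed
  finally show ?thesis unfolding T_def .
qed

lemma finite_tri_H:
  "finite (triangles {0..<(m::nat)} H)"
proof -
  have "triangles {0..<m} H \<subseteq> Pow {0..<m}" unfolding triangles_char by auto
  then show ?thesis by (rule finite_subset) simp
qed

lemma H_sub: "H \<subseteq> tri_edges {0..<(m::nat)} \<Longrightarrow> e \<in> H \<Longrightarrow> e \<subseteq> {0..<m}"
  unfolding tri_edges_def by blast

lemma H_noapex:
  assumes "H \<subseteq> tri_edges {0..<(m::nat)}" "e \<in> H" shows "m \<notin> e"
proof
  assume "m \<in> e"
  then have "m \<in> {0..<m}" using H_sub[OF assms] by blast
  then show False by simp
qed

lemma tau_star_upper:
  assumes HY: "H \<subseteq> tri_edges {0..<m}"
  shows "tau_star {0..m} (Eg m H) \<le> real m / 2 + real (card (triangles {0..<m} H))"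
proof -
  define T where "T = triangles {0..<m} H"
  define f where "f = (\<lambda>t. SOME e. e \<in> tri_edges t \<and> e \<in> H)"
  have fT: "f t \<in> tri_edges t \<and> f t \<in> H" if tT: "t \<in> T" for t
  proof -
    obtain x y z where xyz: "t = {x,y,z}" "x \<noteq> y" "y \<noteq> z" "x \<noteq> z" "{x,y} \<in> H"
      using tT unfolding T_def by (rule triangleE) blast
    then have "{x,y} \<in> tri_edges t \<and> {x,y} \<in> H" unfolding tri_edges_def by auto
    then show ?thesis unfolding f_def by (rule someI)
  qed
  define E where "E = Eg m H"
  define A where "A = (\<lambda>y. {y, m}) ` {0..<m}"
  define x :: "nat set \<Rightarrow> real" where "x = (\<lambda>e. if m \<in> e then 1/2 else if e \<in> f ` T then 1 else 0)"
  have x0: "\<forall>e\<in>E. x e \<ge> 0" unfolding x_def by auto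
  have fin: "finite E" using simple_finite_E[OF Eg_simple[OF HY]] unfolding E_def .
  have feas: "\<forall>t\<in>triangles {0..m} E. (\<Sum>e\<in>tri_edges t. x e) \<ge> 1"
  proof
    fix t assume t: "t \<in> triangles {0..m} E"
    then obtain a b c where abc: "t = {a,b,c}" "a \<noteq> b" "b \<noteq> c" "a \<noteq> c"
      by (rule triangleE) blast
    have sum3: "(\<Sum>e\<in>tri_edges t. x e) = x {a,b} + x {b,c} + x {a,c}"
      unfolding abc(1) by (rule tri_sum_3[OF abc(2-4)])
    have xnn: "\<And>e. x e \<ge> 0" unfolding x_def by auto
    from Eg_triangle_cases[OF HY t[unfolded E_def]] show "(\<Sum>e\<in>tri_edges t. x e) \<ge> 1"
    proof
      assume "\<exists>a b. a < m \<and> b < m \<and> a \<noteq> b \<and> {a, b} \<in> H \<and> t = {a, b, m}"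
      then obtain u v where uv: "u < m" "v < m" "u \<noteq> v" "t = {u, v, m}" by blast
      have s2: "(\<Sum>e\<in>tri_edges t. x e) = x {u,v} + x {v,m} + x {u,m}"
        unfolding uv(4) by (rule tri_sum_3) (use uv in auto)
      have "x {v,m} = 1/2" "x {u,m} = 1/2" unfolding x_def by auto
      then show ?thesis unfolding s2 using xnn[of "{u,v}"] by simp
    next
      assume tH: "t \<in> triangles {0..<m} H"
      then have ft: "f t \<in> tri_edges t" "f t \<in> f ` T" using fT unfolding T_def by auto
      have "f t \<in> H" using fT tH unfolding T_def by auto
      then have "m \<notin> f t" using HY H_noapex by blast
      then have "x (f t) \<ge> 1" unfolding x_def using ft(2) by auto
      moreover have "(\<Sum>e\<in>tri_edges t. x e) \<ge> x (f t)"
      proof -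
        have "finite (tri_edges t)" unfolding abc(1) tri_edges_3[OF abc(2-4)] by simp
        then show ?thesis using ft(1) xnn by (intro member_le_sum) auto
      qed
      ultimately show ?thesis by linarith
    qed
  qed
  have inS: "(\<Sum>e\<in>E. x e) \<in> {(\<Sum>e\<in>E. x e) | x :: nat set \<Rightarrow> real.
      (\<forall>e\<in>E. x e \<ge> 0) \<and> (\<forall>t\<in>triangles {0..m} E. (\<Sum>e\<in>tri_edges t. x e) \<ge> 1)}"
    using x0 feas by blast
  have bdd: "bdd_below {(\<Sum>e\<in>E. x e) | x :: nat set \<Rightarrow> real.
      (\<forall>e\<in>E. x e \<ge> 0) \<and> (\<forall>t\<in>triangles {0..m} E. (\<Sum>e\<in>tri_edges t. x e) \<ge> 1)}"
    by (rule bdd_belowI[of _ 0]) (auto intro: sum_nonneg)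
  have "tau_star {0..m} E \<le> (\<Sum>e\<in>E. x e)" unfolding tau_star_def by (rule cInf_lower[OF inS bdd])
  also have "(\<Sum>e\<in>E. x e) = (\<Sum>e\<in>A. x e) + (\<Sum>e\<in>H. x e)"
  proof -
    have "E = A \<union> H" unfolding E_def Eg_def A_def by auto
    moreover have "A \<inter> H = {}"
    proof -
      have "m \<notin> e" if "e \<in> H" for e using that HY H_noapex by blast
      then show ?thesis unfolding A_def by auto
    qed
    moreover have "finite A" "finite H" using fin unfolding E_def Eg_def A_def by auto
    ultimately show ?thesis by (simp add: sum.union_disjoint)
  qed
  also have "(\<Sum>e\<in>A. x e) = real m / 2"
  proof -
    have "(\<Sum>e\<in>A. x e) = (\<Sum>e\<in>A. 1/2)" unfolding A_def x_def by (intro sum.cong) auto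
    also have "card A = m"
    proof -
      have "inj_on (\<lambda>y. {y, m}) {0..<m}" by (auto simp: inj_on_def doubleton_eq_iff)
      then show ?thesis unfolding A_def by (simp add: card_image)
    qed
    then have "(\<Sum>e\<in>A. (1::real)/2) = real m / 2" by simp
    finally show ?thesis .
  qed
  also have "(\<Sum>e\<in>H. x e) \<le> real (card T)"
  proof -
    have mH: "m \<notin> e" if "e \<in> H" for e using that HY H_noapex by blast
    have finH: "finite H" using fin unfolding E_def Eg_def by auto
    have "(\<Sum>e\<in>H. x e) = (\<Sum>e\<in>H. if e \<in> f ` T then 1 else 0)" unfolding x_def using mH by (intro sum.cong) auto
    also have "\<dots> = (\<Sum>e\<in>{e\<in>H. e \<in> f ` T}. 1)" by (rule sum.inter_filter[OF finH, symmetric])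
    also have "\<dots> = real (card {e\<in>H. e \<in> f ` T})" by simp
    also have "card {e\<in>H. e \<in> f ` T} \<le> card T"
    proof -
      have finT: "finite T" using finite_tri_H[of m H] unfolding T_def .
      have "card {e\<in>H. e \<in> f ` T} \<le> card (f ` T)" by (rule card_mono) (use finT in auto)
      also have "\<dots> \<le> card T" by (rule card_image_le[OF finT])
      finally show ?thesis .
    qed
    finally show ?thesis by simp
  qed
  finally show ?thesis unfolding E_def T_def by simp
qed

definition matching :: "nat set set \<Rightarrow> nat set set \<Rightarrow> bool" where
  "matching H Mt \<longleftrightarrow> Mt \<subseteq> H \<and> (\<forall>e\<in>Mt. \<forall>e'\<in>Mt. e \<noteq> e' \<longrightarrow> e \<inter> e' = {})"

lemma tau_star_lower:
  assumes HY: "H \<subseteq> tri_edges {0..<m}" and Mt: "matching H Mt"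
  shows "real (card Mt) \<le> tau_star {0..m} (Eg m H)"
proof -
  define E where "E = Eg m H"
  have fin: "finite E" using simple_finite_E[OF Eg_simple[OF HY]] unfolding E_def .
  have MtH: "Mt \<subseteq> H" using Mt unfolding matching_def by simp
  have finH: "finite H" using fin unfolding E_def Eg_def by auto
  have finM: "finite Mt" using MtH finH finite_subset by blast
  define Tr where "Tr = (\<lambda>e. tri_edges (insert m e))"
  have edge: "\<exists>a b. e = {a,b} \<and> a \<noteq> b \<and> a < m \<and> b < m" if "e \<in> Mt" for e
    using H_edge[OF HY, of e] that MtH by blast
  have Tr_eq: "Tr e = {e, {b, m}, {a, m}}" if "e = {a,b}" "a \<noteq> b" "a < m" "b < m" for e a b
    unfolding Tr_def that(1) using tri_edges_3[of a b m] that by (simp add: insert_commute)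
  have TrE: "Tr e \<subseteq> E" if eM: "e \<in> Mt" for e
  proof -
    obtain a b where ab: "e = {a,b}" "a \<noteq> b" "a < m" "b < m" using edge[OF eM] by blast
    have "e \<in> H" using eM MtH by auto
    then show ?thesis unfolding Tr_eq[OF ab] E_def Eg_def using ab by auto
  qed
  have finTr: "finite (Tr e)" if "e \<in> Mt" for e using TrE[OF that] fin finite_subset by blast
  have disj: "Tr e \<inter> Tr e' = {}" if ee: "e \<in> Mt" "e' \<in> Mt" "e \<noteq> e'" for e e'
  proof (rule ccontr)
    assume "Tr e \<inter> Tr e' \<noteq> {}"
    then obtain f where f: "f \<subseteq> insert m e" "f \<subseteq> insert m e'" "card f = 2"
      unfolding Tr_def tri_edges_def by auto
    have "e \<inter> e' = {}" using Mt ee unfolding matching_def by blast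
    then have "f \<subseteq> {m}" using f by blast
    then have "card f \<le> card {m}" by (intro card_mono) auto
    then have "card f \<le> 1" by simp
    then show False using f by simp
  qed
  have trin: "insert m e \<in> triangles {0..m} E" if eM: "e \<in> Mt" for e
  proof -
    obtain a b where ab: "e = {a,b}" "a \<noteq> b" "a < m" "b < m" using edge[OF eM] by blast
    have "{a,b} \<in> H" using eM MtH ab by auto
    then have "{a, b, m} \<in> triangles {0..m} E" unfolding E_def by (rule Eg_apex_triangle[OF HY ab(3,4,2)])
    then show ?thesis using ab by (simp add: insert_commute)
  qed
  define S where "S = {(\<Sum>e\<in>E. x e) | x :: nat set \<Rightarrow> real.
      (\<forall>e\<in>E. x e \<ge> 0) \<and> (\<forall>t\<in>triangles {0..m} E. (\<Sum>e\<in>tri_edges t. x e) \<ge> 1)}"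
  have ne: "S \<noteq> {}"
  proof -
    have "(\<Sum>e\<in>tri_edges t. (\<lambda>_. 1::real) e) \<ge> 1" if tT: "t \<in> triangles {0..m} E" for t
    proof -
      obtain x y z where xyz: "t = {x,y,z}" "x \<noteq> y" "y \<noteq> z" "x \<noteq> z"
        by (rule triangleE[OF tT]) blast
      show ?thesis using tri_sum_3[OF xyz(2-4), of "\<lambda>_. 1::real"] xyz(1) by simp
    qed
    then have "(\<Sum>e\<in>E. (\<lambda>_. 1::real) e) \<in> S" unfolding S_def
      by (intro CollectI exI[of _ "\<lambda>_. 1::real"]) auto
    then show ?thesis by blast
  qed
  have "real (card Mt) \<le> Inf S"
  proof (rule cInf_greatest[OF ne])
    fix s assume "s \<in> S"
    then obtain x where x: "\<forall>e\<in>E. x e \<ge> 0" "\<forall>t\<in>triangles {0..m} E. (\<Sum>e\<in>tri_edges t. x e) \<ge> 1"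
      "s = (\<Sum>e\<in>E. x e)" unfolding S_def by blast
    have "real (card Mt) = (\<Sum>e\<in>Mt. 1)" by simp
    also have "\<dots> \<le> (\<Sum>e\<in>Mt. \<Sum>f\<in>Tr e. x f)"
    proof (rule sum_mono)
      fix e assume "e \<in> Mt"
      then show "1 \<le> (\<Sum>f\<in>Tr e. x f)" using x(2) trin unfolding Tr_def by blast
    qed
    also have "\<dots> = (\<Sum>f\<in>(\<Union>e\<in>Mt. Tr e). x f)"
      by (rule sum.UNION_disjoint[symmetric]) (use finM finTr disj in auto)
    also have "\<dots> \<le> (\<Sum>f\<in>E. x f)"
      by (rule sum_mono2[OF fin]) (use TrE x(1) in auto)
    finally show "real (card Mt) \<le> s" using x(3) by simp
  qed
  then show ?thesis unfolding tau_star_def S_def E_def .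
qed

lemma matching_exists:
  assumes HY: "H \<subseteq> tri_edges {0..<m}" and t1: "t \<ge> 1"
    and ind: "\<forall>S. S \<subseteq> {0..<m} \<and> card S = t \<longrightarrow> tri_edges S \<inter> H \<noteq> {}"
  shows "\<exists>Mt. matching H Mt \<and> m + 1 \<le> 2 * card Mt + t"
proof -
  have finH: "finite H"
  proof -
    have "H \<subseteq> Pow {0..<m}" using HY unfolding tri_edges_def by auto
    then show ?thesis by (rule finite_subset) simp
  qed
  have "\<exists>Mt. matching H Mt \<and> (\<forall>M'. matching H M' \<longrightarrow> card M' \<le> card Mt)"
  proof (rule ex_has_greatest_nat[of "matching H" "{}" card "card H + 1"])
    show "matching H {}" unfolding matching_def by simp
    show "\<forall>y. matching H y \<longrightarrow> card y < card H + 1"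
    proof (intro allI impI)
      fix y assume "matching H y"
      then have "y \<subseteq> H" unfolding matching_def by simp
      then have "card y \<le> card H" by (rule card_mono[OF finH])
      then show "card y < card H + 1" by simp
    qed
  qed
  then obtain Mt where mt: "matching H Mt" and mx: "\<forall>M'. matching H M' \<longrightarrow> card M' \<le> card Mt" by blast
  have MtH: "Mt \<subseteq> H" using mt unfolding matching_def by simp
  have finM: "finite Mt" using MtH finH finite_subset by blast
  have sub: "e \<subseteq> {0..<m}" "card e = 2" if "e \<in> Mt" for e
    using that MtH HY unfolding tri_edges_def by auto
  define U where "U = {0..<m} - \<Union>Mt"
  have UM: "\<Union>Mt \<subseteq> {0..<m}" using sub by auto
  have cU: "card U < t"
  proof (rule ccontr)
    assume "\<not> card U < t"
    then have "t \<le> card U" by simp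
    then obtain S where S: "S \<subseteq> U" "card S = t" by (rule obtain_subset_with_card_n) blast
    then have "S \<subseteq> {0..<m}" unfolding U_def by auto
    then obtain e where e: "e \<in> tri_edges S" "e \<in> H" using ind S(2) by blast
    have eU: "e \<subseteq> U" using e(1) S(1) unfolding tri_edges_def by auto
    have ecard: "card e = 2" using e(1) unfolding tri_edges_def by auto
    then have ene: "e \<noteq> {}" by auto
    have disj: "e \<inter> e' = {}" if "e' \<in> Mt" for e' using eU that unfolding U_def by auto
    have enM: "e \<notin> Mt" using disj ene by blast
    have "matching H (insert e Mt)"
      using mt e(2) disj unfolding matching_def by (auto simp: Int_commute)
    then have "card (insert e Mt) \<le> card Mt" using mx by blast
    then show False using enM finM by simp
  qed
  have cUn: "card (\<Union>Mt) = 2 * card Mt"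
  proof -
    have "pairwise disjnt Mt" using mt unfolding matching_def pairwise_def disjnt_def by blast
    moreover have "\<And>A. A \<in> Mt \<Longrightarrow> finite A" using sub by (meson finite_atLeastLessThan finite_subset)
    ultimately have "card (\<Union>Mt) = sum card Mt" by (rule card_Union_disjoint)
    also have "\<dots> = sum (\<lambda>_. 2) Mt" using sub by (intro sum.cong) auto
    finally show ?thesis by simp
  qed
  have "card U = m - card (\<Union>Mt)" unfolding U_def using UM
    by (simp add: card_Diff_subset finite_subset)
  moreover have "card (\<Union>Mt) \<le> m" using card_mono[OF _ UM] by simp
  ultimately have "m + 1 \<le> 2 * card Mt + t" using cU cUn by linarith
  then show ?thesis using mt by blast
qed

lemma card_le_edges:
  assumes HY: "H \<subseteq> tri_edges {0..<(m::nat)}" and t1: "t \<ge> 1"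
    and ind: "\<forall>S. S \<subseteq> {0..<m} \<and> card S = t \<longrightarrow> tri_edges S \<inter> H \<noteq> {}"
    and T: "T \<subseteq> {0..<m}"
  shows "card T \<le> card {e\<in>H. e \<subseteq> T} + (t - 1)"
  using T
proof (induction "card T" arbitrary: T rule: less_induct)
  case less
  have finH: "finite H"
  proof -
    have "H \<subseteq> Pow {0..<m}" using HY unfolding tri_edges_def by auto
    then show ?thesis by (rule finite_subset) simp
  qed
  have finT: "finite T" using less.prems by (meson finite_atLeastLessThan finite_subset)
  show ?case
  proof (cases "\<exists>e\<in>H. e \<subseteq> T")
    case True
    then obtain e where e: "e \<in> H" "e \<subseteq> T" by blast
    obtain a b where ab: "e = {a,b}" "a \<noteq> b" using H_edge[OF HY e(1)] by blast
    define T' where "T' = T - {a}"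
    have aT: "a \<in> T" using e ab by auto
    have cT': "card T' = card T - 1" unfolding T'_def using aT finT by simp
    have lt: "card T' < card T" unfolding T'_def by (rule card_Diff1_less[OF finT aT])
    have IH: "card T' \<le> card {e\<in>H. e \<subseteq> T'} + (t - 1)"
      using less.hyps[OF lt] less.prems unfolding T'_def by auto
    have "{e\<in>H. e \<subseteq> T'} \<subseteq> {e\<in>H. e \<subseteq> T} - {e}" unfolding T'_def using ab by auto
    then have "card {e\<in>H. e \<subseteq> T'} \<le> card ({e\<in>H. e \<subseteq> T} - {e})"
      by (rule card_mono[rotated]) (use finH in auto)
    also have "\<dots> = card {e\<in>H. e \<subseteq> T} - 1" using e finH by (simp add: card_Diff_singleton)
    finally have "card {e\<in>H. e \<subseteq> T'} \<le> card {e\<in>H. e \<subseteq> T} - 1" .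
    moreover have "card {e\<in>H. e \<subseteq> T} \<ge> 1"
    proof -
      have "{e\<in>H. e \<subseteq> T} \<noteq> {}" using e by blast
      then show ?thesis using finH by (simp add: Suc_leI card_gt_0_iff)
    qed
    moreover have "card T \<ge> 1" using lt by simp
    ultimately show ?thesis using IH cT' by arith
  next
    case False
    have "card T < t"
    proof (rule ccontr)
      assume "\<not> card T < t"
      then have "t \<le> card T" by simp
      then obtain S where S: "S \<subseteq> T" "card S = t" by (rule obtain_subset_with_card_n) blast
      then obtain e where e: "e \<in> tri_edges S" "e \<in> H" using ind less.prems by blast
      then have "e \<subseteq> T" using S(1) unfolding tri_edges_def by auto
      then show False using False e(2) by blast
    qed
    then show ?thesis by simp
  qed
qed

lemma tau_lower:
  assumes HY: "H \<subseteq> tri_edges {0..<m}" and t1: "t \<ge> 1"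
    and ind: "\<forall>S. S \<subseteq> {0..<m} \<and> card S = t \<longrightarrow> tri_edges S \<inter> H \<noteq> {}"
  shows "m + 1 \<le> tau {0..m} (Eg m H) + t"
proof -
  obtain F where F: "F \<subseteq> Eg m H" "\<forall>t\<in>triangles {0..m} (Eg m H). F \<inter> tri_edges t \<noteq> {}"
    "tau {0..m} (Eg m H) = card F" by (rule tau_attained[OF Eg_simple[OF HY]])
  have finE: "finite (Eg m H)" by (rule simple_finite_E[OF Eg_simple[OF HY]])
  have finF: "finite F" using F(1) finE finite_subset by blast
  define T where "T = {y\<in>{0..<m}. {y, m} \<notin> F}"
  have TY: "T \<subseteq> {0..<m}" unfolding T_def by auto
  define A where "A = (\<lambda>y. {y, m}) ` ({0..<m} - T)"
  define B where "B = {e\<in>H. e \<subseteq> T}"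
  have AF: "A \<subseteq> F" unfolding A_def T_def by auto
  have BF: "B \<subseteq> F"
  proof
    fix e assume "e \<in> B"
    then have eH: "e \<in> H" and eT: "e \<subseteq> T" unfolding B_def by auto
    obtain a b where ab: "e = {a,b}" "a \<noteq> b" "a < m" "b < m" using H_edge[OF HY eH] by blast
    have tri: "{a, b, m} \<in> triangles {0..m} (Eg m H)"
      by (rule Eg_apex_triangle[OF HY ab(3,4,2)]) (use eH ab in simp)
    have te: "tri_edges {a, b, m} = {{a, b}, {b, m}, {a, m}}" by (rule tri_edges_3) (use ab in auto)
    have "{a, m} \<notin> F" "{b, m} \<notin> F" using eT ab unfolding T_def by auto
    moreover have "F \<inter> tri_edges {a, b, m} \<noteq> {}" using F(2) tri by blast
    ultimately show "e \<in> F" unfolding te ab(1) by blast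
  qed
  have AB: "A \<inter> B = {}"
  proof -
    have "m \<notin> e" if "e \<in> B" for e using that H_noapex[OF HY] unfolding B_def by blast
    then show ?thesis unfolding A_def by auto
  qed
  have cA: "card A = m - card T"
  proof -
    have "inj_on (\<lambda>y. {y, m}) ({0..<m} - T)" by (auto simp: inj_on_def doubleton_eq_iff)
    then have "card A = card ({0..<m} - T)" unfolding A_def by (simp add: card_image)
    also have "\<dots> = m - card T" using TY by (simp add: card_Diff_subset finite_subset)
    finally show ?thesis .
  qed
  have "card A + card B = card (A \<union> B)" using AB finF AF BF
    by (metis card_Un_disjoint finite_subset)
  also have "\<dots> \<le> card F" using AF BF finF by (intro card_mono) auto
  finally have "card A + card B \<le> card F" .
  moreover have "card T \<le> card B + (t - 1)" unfolding B_def by (rule card_le_edges[OF HY t1 ind TY])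
  moreover have "card T \<le> m" using card_mono[OF _ TY] by simp
  ultimately show ?thesis using F(3) cA t1 by linarith
qed

definition mk :: "nat \<Rightarrow> nat" where "mk n = 2 ^ (4 * (n + 7))"
definition Mk :: "nat \<Rightarrow> nat" where "Mk n = 2 ^ ((n + 7) - 1) * (2 ^ (4 * (n + 7)) - 1)"
definition tk :: "nat \<Rightarrow> nat" where "tk n = 2 ^ (3 * (n + 7) + 2) * (4 * (n + 7) + 1) + 1"
definition Kk :: "nat \<Rightarrow> real" where "Kk n = 4 * (2::real) ^ (3 * (n + 7))"

definition goodH :: "nat \<Rightarrow> nat set set \<Rightarrow> bool" where
  "goodH n H \<longleftrightarrow> H \<subseteq> tri_edges {0..<mk n} \<and>
     (\<forall>S. S \<subseteq> {0..<mk n} \<and> card S = tk n \<longrightarrow> tri_edges S \<inter> H \<noteq> {}) \<and>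
     real (card (triangles {0..<mk n} H)) < Kk n"

lemma goodH_exists: "\<exists>H. goodH n H"
proof -
  have k7: "n + 7 \<ge> 7" by simp
  note nm = numeric[OF k7]
  have fY: "finite {0..<mk n}" by simp
  have cY: "card {0..<mk n} = mk n" by simp
  have ce: "card (tri_edges {0..<mk n}) = mk n choose 2" using tri_edges_card[OF fY] cY by simp
  have Kpos: "Kk n > 0" unfolding Kk_def by simp
  have "\<exists>H \<subseteq> tri_edges {0..<mk n}. (\<forall>S. S \<subseteq> {0..<mk n} \<and> card S = tk n \<longrightarrow> tri_edges S \<inter> H \<noteq> {})
            \<and> real (card (triangles {0..<mk n} H)) < Kk n"
  proof (rule exists_graph[OF fY Kpos, of "Mk n"])
    show "3 \<le> Mk n" using nm(1) unfolding Mk_def .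
    show "Mk n \<le> card (tri_edges {0..<mk n})" unfolding ce using nm(2) unfolding Mk_def mk_def .
    show "real (card {0..<mk n} choose 3) * real (card (tri_edges {0..<mk n}) - 3 choose (Mk n - 3)) +
      Kk n * (real (card {0..<mk n} choose tk n) * real (card (tri_edges {0..<mk n}) - (tk n choose 2) choose Mk n))
      < Kk n * real (card (tri_edges {0..<mk n}) choose Mk n)"
      unfolding ce cY using nm(4) unfolding Mk_def mk_def tk_def Kk_def .
  qed
  then show ?thesis unfolding goodH_def by blast
qed

definition Hs :: "nat \<Rightarrow> nat set set" where "Hs n = (SOME H. goodH n H)"

lemma Hs_good: "goodH n (Hs n)"
  unfolding Hs_def using goodH_exists someI_ex by metis

lemma tk_le: "tk n \<le> mk n" "tk n \<ge> 1"
proof -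
  have k7: "n + 7 \<ge> 7" by simp
  show "tk n \<le> mk n" using numeric(3)[OF k7] unfolding tk_def mk_def .
  show "tk n \<ge> 1" unfolding tk_def by simp
qed

lemma bounds:
  fixes n :: nat
  defines "m \<equiv> real (mk n)" and "t \<equiv> real (tk n)" and "K \<equiv> Kk n"
  shows "m + 1 - t \<le> real (tau {0..mk n} (Eg (mk n) (Hs n)))"
    "real (tau {0..mk n} (Eg (mk n) (Hs n))) \<le> m + K"
    "(m + 1 - t) / 2 \<le> tau_star {0..mk n} (Eg (mk n) (Hs n))"
    "tau_star {0..mk n} (Eg (mk n) (Hs n)) \<le> m / 2 + K"
proof -
  have g: "goodH n (Hs n)" by (rule Hs_good)
  have HY: "Hs n \<subseteq> tri_edges {0..<mk n}" and ind: "\<forall>S. S \<subseteq> {0..<mk n} \<and> card S = tk n \<longrightarrow> tri_edges S \<inter> Hs n \<noteq> {}"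
    and cK: "real (card (triangles {0..<mk n} (Hs n))) < Kk n" using g unfolding goodH_def by auto
  have "mk n + 1 \<le> tau {0..mk n} (Eg (mk n) (Hs n)) + tk n" by (rule tau_lower[OF HY tk_le(2) ind])
  then show "m + 1 - t \<le> real (tau {0..mk n} (Eg (mk n) (Hs n)))" unfolding m_def t_def by linarith
  have "tau {0..mk n} (Eg (mk n) (Hs n)) \<le> mk n + card (triangles {0..<mk n} (Hs n))" by (rule tau_upper[OF HY])
  then show "real (tau {0..mk n} (Eg (mk n) (Hs n))) \<le> m + K" using cK unfolding m_def K_def by linarith
  obtain Mt where Mt: "matching (Hs n) Mt" "mk n + 1 \<le> 2 * card Mt + tk n"
    using matching_exists[OF HY tk_le(2) ind] by blast
  have "real (card Mt) \<le> tau_star {0..mk n} (Eg (mk n) (Hs n))" by (rule tau_star_lower[OF HY Mt(1)])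
  moreover have "real (mk n + 1) \<le> real (2 * card Mt + tk n)" using Mt(2) by (simp only: of_nat_le_iff)
  ultimately show "(m + 1 - t) / 2 \<le> tau_star {0..mk n} (Eg (mk n) (Hs n))" unfolding m_def t_def by simp
  have "tau_star {0..mk n} (Eg (mk n) (Hs n)) \<le> real (mk n) / 2 + real (card (triangles {0..<mk n} (Hs n)))"
    by (rule tau_star_upper[OF HY])
  then show "tau_star {0..mk n} (Eg (mk n) (Hs n)) \<le> m / 2 + K" using cK unfolding m_def K_def by linarith
qed

lemma lim_a: "(\<lambda>n. real (n + 7) / 2 ^ (n + 7)) \<longlonglongrightarrow> 0"
proof -
  have "(\<lambda>n. of_nat n / (2::real) ^ n) \<longlonglongrightarrow> 0" by (rule lim_n_over_pown) simp
  then have "(\<lambda>n. of_nat (n + 7) / (2::real) ^ (n + 7)) \<longlonglongrightarrow> 0" by (rule LIMSEQ_ignore_initial_segment)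
  then show ?thesis by simp
qed

lemma lim_b: "(\<lambda>n. 1 / (2::real) ^ (n + 7)) \<longlonglongrightarrow> 0"
proof -
  have "(\<lambda>n. inverse ((2::real) ^ n)) \<longlonglongrightarrow> 0" by (rule LIMSEQ_inverse_realpow_zero) simp
  then have "(\<lambda>n. inverse ((2::real) ^ (n + 7))) \<longlonglongrightarrow> 0" by (rule LIMSEQ_ignore_initial_segment)
  then show ?thesis by (simp add: divide_inverse)
qed

lemma ident:
  fixes n :: nat
  defines "x \<equiv> (2::real) ^ (n + 7)" and "a \<equiv> real (n + 7) / (2::real) ^ (n + 7)" and "b \<equiv> 1 / (2::real) ^ (n + 7)"
  shows "real (mk n) + 1 - real (tk n) = x ^ 4 * (1 - 16 * a - 4 * b)"
    "real (mk n) / 2 + Kk n = x ^ 4 * (1/2 + 4 * b)"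
    "real (mk n) + Kk n = x ^ 4 * (1 + 4 * b)"
proof -
  have xpos: "x > 0" unfolding x_def by simp
  have m: "real (mk n) = x ^ 4" unfolding mk_def x_def by (simp add: power_mult[symmetric] mult.commute)
  have x3: "(2::real) ^ (3 * (n + 7)) = x ^ 3" unfolding x_def by (simp add: power_mult[symmetric] mult.commute)
  have t: "real (tk n) = 4 * x ^ 3 * (4 * real (n + 7) + 1) + 1"
  proof -
    have "real (tk n) = 2 ^ (3 * (n + 7) + 2) * (4 * real (n + 7) + 1) + 1" unfolding tk_def by simp
    also have "(2::real) ^ (3 * (n + 7) + 2) = 4 * x ^ 3" unfolding x3[symmetric] by (simp add: power_add)
    finally show ?thesis .
  qed
  have K: "Kk n = 4 * x ^ 3" unfolding Kk_def x3 ..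
  have a: "a = real (n + 7) / x" unfolding a_def x_def ..
  have b: "b = 1 / x" unfolding b_def x_def ..
  have x4: "x ^ 4 = x * x ^ 3" by (simp add: power_Suc[symmetric])
  define y where "y = x ^ 3"
  define k where "k = real (n + 7)"
  have "x * y + 1 - (4 * y * (4 * k + 1) + 1) = x * y * (1 - 16 * (k / x) - 4 * (1 / x))"
    using xpos by (simp add: field_simps)
  then show "real (mk n) + 1 - real (tk n) = x ^ 4 * (1 - 16 * a - 4 * b)"
    unfolding m t a b x4 y_def k_def by simp
  have "x * y / 2 + 4 * y = x * y * (1/2 + 4 * (1 / x))" using xpos by (simp add: field_simps)
  then show "real (mk n) / 2 + Kk n = x ^ 4 * (1/2 + 4 * b)"
    unfolding m K b x4 y_def by simp
  have "x * y + 4 * y = x * y * (1 + 4 * (1 / x))" using xpos by (simp add: field_simps)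
  then show "real (mk n) + Kk n = x ^ 4 * (1 + 4 * b)"
    unfolding m K b x4 y_def by simp
qed

lemma cancel_a: "(c::real) \<noteq> 0 \<Longrightarrow> (c * p) / (c * q) = p / q"
  by simp

lemma cancel_b: "(c::real) \<noteq> 0 \<Longrightarrow> (c * p) / ((c * q) / 2) = p / (q / 2)"
  by (simp add: field_simps)

lemma part2:
  "\<exists>(Vs :: nat \<Rightarrow> nat set) Es.
            (\<forall>n. simple_graph (Vs n) (Es n)) \<and>
            (\<forall>n. tau_star (Vs n) (Es n) > 0) \<and>
            (\<lambda>n. real (tau (Vs n) (Es n)) / tau_star (Vs n) (Es n)) \<longlonglongrightarrow> 2"
proof -
  define Vs where "Vs = (\<lambda>n. {0..mk n})"
  define Es where "Es = (\<lambda>n. Eg (mk n) (Hs n))"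
  define a where "a = (\<lambda>n. real (n + 7) / (2::real) ^ (n + 7))"
  define b where "b = (\<lambda>n. 1 / (2::real) ^ (n + 7))"
  define L where "L = (\<lambda>n. (1 - 16 * a n - 4 * b n) / (1/2 + 4 * b n))"
  define U where "U = (\<lambda>n. (1 + 4 * b n) / ((1 - 16 * a n - 4 * b n) / 2))"
  have sg: "\<forall>n. simple_graph (Vs n) (Es n)"
  proof
    fix n
    have "Hs n \<subseteq> tri_edges {0..<mk n}" using Hs_good[of n] unfolding goodH_def by blast
    then show "simple_graph (Vs n) (Es n)" unfolding Vs_def Es_def by (rule Eg_simple)
  qed
  have Apos: "real (mk n) + 1 - real (tk n) > 0" for n using tk_le(1)[of n] by linarith
  have pos: "\<forall>n. tau_star (Vs n) (Es n) > 0"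
  proof
    fix n
    have "(real (mk n) + 1 - real (tk n)) / 2 > 0" using Apos[of n] by simp
    then show "tau_star (Vs n) (Es n) > 0" using bounds(3)[of n] unfolding Vs_def Es_def by linarith
  qed
  have low: "L n \<le> real (tau (Vs n) (Es n)) / tau_star (Vs n) (Es n)" for n
  proof -
    define A where "A = real (mk n) + 1 - real (tk n)"
    have "A / (real (mk n) / 2 + Kk n) \<le> real (tau (Vs n) (Es n)) / tau_star (Vs n) (Es n)"
      by (rule frac_le) (use Apos[of n] bounds(1,4)[of n] pos in \<open>auto simp: A_def Vs_def Es_def\<close>)
    moreover have "A / (real (mk n) / 2 + Kk n) = L n"
    proof -
      have x4: "((2::real) ^ (n + 7)) ^ 4 \<noteq> 0" by simp
      show ?thesis unfolding A_def ident L_def a_def b_def by (rule cancel_a[OF x4])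
    qed
    ultimately show ?thesis by simp
  qed
  have up: "real (tau (Vs n) (Es n)) / tau_star (Vs n) (Es n) \<le> U n" for n
  proof -
    define A where "A = real (mk n) + 1 - real (tk n)"
    have "real (tau (Vs n) (Es n)) / tau_star (Vs n) (Es n) \<le> (real (mk n) + Kk n) / (A / 2)"
      by (rule frac_le) (use Apos[of n] bounds(2,3)[of n] in \<open>auto simp: A_def Vs_def Es_def\<close>)
    moreover have "(real (mk n) + Kk n) / (A / 2) = U n"
    proof -
      have x4: "((2::real) ^ (n + 7)) ^ 4 \<noteq> 0" by simp
      show ?thesis unfolding A_def ident U_def a_def b_def by (rule cancel_b[OF x4])
    qed
    ultimately show ?thesis by simp
  qed
  have la: "a \<longlonglongrightarrow> 0" unfolding a_def by (rule lim_a)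
  have lb: "b \<longlonglongrightarrow> 0" unfolding b_def by (rule lim_b)
  have n1: "(\<lambda>n. 1 - 16 * a n - 4 * b n) \<longlonglongrightarrow> 1 - 16 * 0 - 4 * 0"
    by (intro tendsto_intros la lb)
  then have n1': "(\<lambda>n. 1 - 16 * a n - 4 * b n) \<longlonglongrightarrow> 1" by simp
  have d1: "(\<lambda>n. 1/2 + 4 * b n) \<longlonglongrightarrow> 1/2 + 4 * 0"
    by (intro tendsto_intros lb)
  then have d1': "(\<lambda>n. 1/2 + 4 * b n) \<longlonglongrightarrow> 1/2" by simp
  have "L \<longlonglongrightarrow> 1 / (1/2)"
    unfolding L_def by (rule tendsto_divide[OF n1' d1']) simp
  then have lL: "L \<longlonglongrightarrow> 2" by simp
  have u1: "(\<lambda>n. 1 + 4 * b n) \<longlonglongrightarrow> 1 + 4 * 0" by (intro tendsto_intros lb)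
  then have u1': "(\<lambda>n. 1 + 4 * b n) \<longlonglongrightarrow> 1" by simp
  have v1: "(\<lambda>n. (1 - 16 * a n - 4 * b n) / 2) \<longlonglongrightarrow> 1 / 2"
    by (rule tendsto_divide[OF n1' tendsto_const]) simp
  have "U \<longlonglongrightarrow> 1 / (1/2)"
    unfolding U_def by (rule tendsto_divide[OF u1' v1]) simp
  then have lU: "U \<longlonglongrightarrow> 2" by simp
  have "(\<lambda>n. real (tau (Vs n) (Es n)) / tau_star (Vs n) (Es n)) \<longlonglongrightarrow> 2"
    by (rule tendsto_sandwich[OF _ _ lL lU]) (use low up in auto)
  then show ?thesis using sg pos by blast
qed

theorem proposition6:
  shows "(\<forall>(V :: 'a set) E. simple_graph V E \<longrightarrow>
            real (tau V E) \<le> 3 / 2 * tau_k 3 V E)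
       \<and> (\<exists>(Vs :: nat \<Rightarrow> nat set) Es.
            (\<forall>n. simple_graph (Vs n) (Es n)) \<and>
            (\<forall>n. tau_star (Vs n) (Es n) > 0) \<and>
            (\<lambda>n. real (tau (Vs n) (Es n)) / tau_star (Vs n) (Es n)) \<longlonglongrightarrow> 2)"
proof (intro conjI)
  show "\<forall>(V :: 'a set) E. simple_graph V E \<longrightarrow> real (tau V E) \<le> 3 / 2 * tau_k 3 V E"
    using part1 by blast
  show "\<exists>(Vs :: nat \<Rightarrow> nat set) Es.
            (\<forall>n. simple_graph (Vs n) (Es n)) \<and>
            (\<forall>n. tau_star (Vs n) (Es n) > 0) \<and>
            (\<lambda>n. real (tau (Vs n) (Es n)) / tau_star (Vs n) (Es n)) \<longlonglongrightarrow> 2"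
    by (rule part2)
qed

end
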